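(* Let $\mathcal{P}$ be a finite set of passwords, let $R_1,\dots,R_m\subseteq\mathcal{P}$ be positive rules, and let $\ell$ be a ranking (total order) of $\mathcal{P}$. For $S\subseteq[m]$ let $\mathcal{A}_S=\bigcup_{i\in S}R_i$, and let $\ell(\mathcal{A}_S)$ denote the $\ell$-most-preferred password in $\mathcal{A}_S$ (if $\mathcal{A}_S\neq\emptyset$). Consider the procedure Reduce: set $S_0=[m]$, $i=0$, and $\hat\ell$ the empty list; while $S_i\neq\emptyset$, let $w=\ell(\mathcal{A}_{S_i})$, append $w$ to $\hat\ell$, set $S_{i+1}=S_i\setminus\{j : w\in R_j\}$ and increase $i$ by one; finally output $\hat\ell$. Then Reduce makes at most $m$ queries of the form $\ell(\mathcal{A}_{S})$ and at most $m^2$ membership queries ("is $w\in R_j$?"), and outputs a list $\hat\ell$ of at most $m$ passwords such that for every $S\subseteq[m]$ (with $\mathcal{A}_S\neq\emptyset$) the first password of $\hat\ell$ lying in $\mathcal{A}_S$ equals $\ell(\mathcal{A}_S)$.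
   Context: A ranking of $\mathcal{P}$ represents a user's preferences: the user prefers earlier passwords. Under a password policy $\mathcal{A}\subseteq\mathcal{P}$ a user picks the most preferred password in $\mathcal{A}$. In the positive rules setting, the policy determined by a set $S\subseteq[m]$ of active rules is $\mathcal{A}_S=\bigcup_{i\in S}R_i$. *)

theory Defs
  imports Main "HOL-Library.While_Combinator"
begin

text \<open>A ranking of the password set is a duplicate-free list enumerating it;
  earlier entries are preferred. first_in xs A is the first entry of xs lying in A,
  i.e. the most preferred password of A with respect to xs.\<close>
definition first_in :: "'a list \<Rightarrow> 'a set \<Rightarrow> 'a" where
  "first_in xs A = hd (filter (\<lambda>x. x \<in> A) xs)"

definition policy :: "(nat \<Rightarrow> 'a set) \<Rightarrow> nat set \<Rightarrow> 'a set" where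
  "policy R S = (\<Union>i\<in>S. R i)"

text \<open>State: (current S_i, output list so far,
  number of queries of the form l(A_S), number of membership queries).
  The membership tests "w \<in> R_j" are performed for the j in S_i.\<close>
definition reduce_step ::
  "(nat \<Rightarrow> 'a set) \<Rightarrow> 'a list \<Rightarrow> nat set \<times> 'a list \<times> nat \<times> nat \<Rightarrow> nat set \<times> 'a list \<times> nat \<times> nat" where
  "reduce_step R rank st =
     (case st of (S, L, q, r) \<Rightarrow>
        (let w = first_in rank (policy R S)
         in (S - {j \<in> S. w \<in> R j}, L @ [w], Suc q, r + card S)))"

text \<open>The procedure Reduce with S_0 = [m] = {1..m}; None means non-termination.\<close>
definition reduce ::
  "(nat \<Rightarrow> 'a set) \<Rightarrow> nat \<Rightarrow> 'a list \<Rightarrow> (nat set \<times> 'a list \<times> nat \<times> nat) option" where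
  "reduce R m rank =
     while_option (\<lambda>(S, _, _, _). S \<noteq> {}) (reduce_step R rank) ({1..m}, [], 0, 0)"

end

theory Submission
  imports Defs
begin

lemma first_in_append:
  "first_in (xs @ ys) A = (if \<exists>x\<in>set xs. x \<in> A then first_in xs A else first_in ys A)"
  unfolding first_in_def by (auto simp: filter_empty_conv)

lemma first_in_sub:
  "A \<subseteq> B \<Longrightarrow> first_in xs B \<in> A \<Longrightarrow> first_in xs A = first_in xs B"
  by (induction xs) (auto simp: first_in_def)

lemma first_in_mem: "A \<inter> set xs \<noteq> {} \<Longrightarrow> first_in xs A \<in> A \<inter> set xs"
proof -
  assume "A \<inter> set xs \<noteq> {}"
  then have "filter (\<lambda>x. x \<in> A) xs \<noteq> []" by (auto simp: filter_empty_conv)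
  then have "hd (filter (\<lambda>x. x \<in> A) xs) \<in> set (filter (\<lambda>x. x \<in> A) xs)" by (rule hd_in_set)
  then show ?thesis unfolding first_in_def by (simp only: set_filter) blast
qed

definition Inv where
  "Inv R m rank = (\<lambda>(S, L, q, r). S \<subseteq> {1..m} \<and> q = length L \<and> length L + card S \<le> m \<and>
     r \<le> length L * m \<and> (\<forall>j\<in>{1..m}-S. \<exists>x\<in>set L. x \<in> R j) \<and>
     (\<forall>T\<subseteq>{1..m}. (\<exists>x\<in>set L. x \<in> policy R T) \<longrightarrow> first_in L (policy R T) = first_in rank (policy R T)))"

lemma step_ok:
  assumes R: "\<forall>j\<in>{1..m}. R j \<subseteq> set rank \<and> R j \<noteq> {}"
    and I: "Inv R m rank (S, L, q, r)" and ne: "S \<noteq> {}"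
  shows "Inv R m rank (reduce_step R rank (S, L, q, r))
     \<and> card (S - {j \<in> S. first_in rank (policy R S) \<in> R j}) < card S"
proof -
  define w where "w = first_in rank (policy R S)"
  define S' where "S' = S - {j \<in> S. w \<in> R j}"
  have Ssub: "S \<subseteq> {1..m}" and q: "q = length L" and c: "length L + card S \<le> m"
    and rr: "r \<le> length L * m" and rem: "\<forall>j\<in>{1..m}-S. \<exists>x\<in>set L. x \<in> R j"
    and fi: "\<forall>T\<subseteq>{1..m}. (\<exists>x\<in>set L. x \<in> policy R T) \<longrightarrow> first_in L (policy R T) = first_in rank (policy R T)"
    using I unfolding Inv_def by auto
  have fin: "finite S" using Ssub finite_subset by blast
  obtain j0 where j0: "j0 \<in> S" using ne by blast
  then obtain y where "y \<in> R j0" using R Ssub by blast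
  then have "policy R S \<inter> set rank \<noteq> {}" using R Ssub j0 unfolding policy_def by blast
  then have hw: "w \<in> policy R S" unfolding w_def using first_in_mem[of "policy R S" rank] by (meson IntD1)
  then obtain j1 where j1: "j1 \<in> S" "w \<in> R j1" unfolding policy_def by blast
  have lt: "card S' < card S" unfolding S'_def using fin j1
    by (intro psubset_card_mono) auto
  have cS: "card S \<le> m" using card_mono[OF _ Ssub] by simp
  have I1: "S' \<subseteq> {1..m}" using Ssub S'_def by auto
  have I2: "length (L @ [w]) + card S' \<le> m" using lt c by simp
  have I3: "r + card S \<le> length (L @ [w]) * m" using rr cS by simp
  have I4: "\<forall>j\<in>{1..m}-S'. \<exists>x\<in>set (L @ [w]). x \<in> R j" using rem S'_def by auto
  have I5: "first_in (L @ [w]) (policy R T) = first_in rank (policy R T)"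
    if T: "T \<subseteq> {1..m}" and ex: "\<exists>x\<in>set (L @ [w]). x \<in> policy R T" for T
  proof (cases "\<exists>x\<in>set L. x \<in> policy R T")
    case True then show ?thesis using fi T by (simp add: first_in_append)
  next
    case False
    then have wT: "w \<in> policy R T" using ex by auto
    have "T \<subseteq> S"
    proof
      fix j assume "j \<in> T"
      show "j \<in> S"
      proof (rule ccontr)
        assume "j \<notin> S"
        then obtain x where "x \<in> set L" "x \<in> R j" using rem T \<open>j \<in> T\<close> by blast
        then show False using False \<open>j \<in> T\<close> unfolding policy_def by blast
      qed
    qed
    then have "policy R T \<subseteq> policy R S" unfolding policy_def by blast
    then have "first_in rank (policy R T) = w" using first_in_sub[of "policy R T" "policy R S" rank] wT unfolding w_def by simp
    then show ?thesis using False wT by (simp add: first_in_append first_in_def)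
  qed
  have st: "reduce_step R rank (S, L, q, r) = (S', L @ [w], Suc q, r + card S)"
    unfolding reduce_step_def Let_def w_def S'_def by simp
  have "Inv R m rank (S', L @ [w], Suc q, r + card S)"
    unfolding Inv_def using I1 I2 I3 I4 I5 q by (simp only: prod.case) (intro conjI; simp)
  then show ?thesis using st lt unfolding S'_def w_def by simp
qed

theorem claim3p1:
  fixes P :: "'a set" and R :: "nat \<Rightarrow> 'a set" and m :: nat and rank :: "'a list"
  assumes "finite P"
    and "\<forall>j\<in>{1..m}. R j \<subseteq> P \<and> R j \<noteq> {}"
    and "distinct rank" and "set rank = P"
  shows "\<exists>S' L q r. reduce R m rank = Some (S', L, q, r) \<and>
           q \<le> m \<and> r \<le> m ^ 2 \<and> length L \<le> m \<and>
           (\<forall>S \<subseteq> {1..m}. policy R S \<noteq> {} \<longrightarrow>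
              (\<exists>x\<in>set L. x \<in> policy R S) \<and>
              first_in L (policy R S) = first_in rank (policy R S))"
proof -
  have R: "\<forall>j\<in>{1..m}. R j \<subseteq> set rank \<and> R j \<noteq> {}" using assms by auto
  let ?b = "\<lambda>(S, _::'a list, _::nat, _::nat). S \<noteq> {}"
  let ?c = "reduce_step R rank"
  have pres: "\<And>s. Inv R m rank s \<Longrightarrow> ?b s \<Longrightarrow> Inv R m rank (?c s)"
    using step_ok[OF R] by auto
  have init: "Inv R m rank ({1..m}, [], 0, 0)" unfolding Inv_def by auto
  have wf: "wf {(t, s). (Inv R m rank s \<and> ?b s) \<and> t = ?c s}"
  proof (rule wf_subset[OF wf_measure[of "\<lambda>s. card (fst s)"]])
    show "{(t, s). (Inv R m rank s \<and> ?b s) \<and> t = ?c s} \<subseteq> measure (\<lambda>s. card (fst s))"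
    proof
      fix p assume p: "p \<in> {(t, s). (Inv R m rank s \<and> ?b s) \<and> t = ?c s}"
      obtain t S L q r where pe: "p = (t, (S, L, q, r))" by (cases p) auto
      have h: "Inv R m rank (S, L, q, r)" "S \<noteq> {}" "t = ?c (S, L, q, r)" using p pe by auto
      have "card (fst t) < card S" using step_ok[OF R h(1,2)] h(3) by (simp add: reduce_step_def Let_def)
      then show "p \<in> measure (\<lambda>s. card (fst s))" using pe by simp
    qed
  qed
  obtain t where t: "while_option ?b ?c ({1..m}, [], 0, 0) = Some t"
    using wf_while_option_Some[OF wf pres init] by blast
  obtain S' L q r where tt: "t = (S', L, q, r)" by (cases t) auto
  have It: "Inv R m rank t" using while_option_rule[where P="Inv R m rank", OF pres t init] by blast
  have bt: "\<not> ?b t" using while_option_stop[OF t] .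
  have red: "reduce R m rank = Some (S', L, q, r)" using t tt unfolding reduce_def by simp
  have S'e: "S' = {}" using bt tt by simp
  have props: "q = length L" "length L \<le> m" "r \<le> length L * m"
    "\<forall>j\<in>{1..m}. \<exists>x\<in>set L. x \<in> R j"
    "\<forall>T\<subseteq>{1..m}. (\<exists>x\<in>set L. x \<in> policy R T) \<longrightarrow> first_in L (policy R T) = first_in rank (policy R T)"
    using It tt S'e unfolding Inv_def by auto
  have "r \<le> m ^ 2"
  proof -
    have "length L * m \<le> m * m" using props(2) by simp
    then show ?thesis using props(3) unfolding power2_eq_square by linarith
  qed
  moreover have "\<forall>S \<subseteq> {1..m}. policy R S \<noteq> {} \<longrightarrow>
              (\<exists>x\<in>set L. x \<in> policy R S) \<and>
              first_in L (policy R S) = first_in rank (policy R S)"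
  proof (intro allI impI)
    fix S assume S: "S \<subseteq> {1..m}" "policy R S \<noteq> {}"
    then obtain j where "j \<in> S" unfolding policy_def by blast
    then obtain x where "x \<in> set L" "x \<in> R j" using props(4) S by blast
    then have ex: "\<exists>x\<in>set L. x \<in> policy R S" using \<open>j \<in> S\<close> unfolding policy_def by blast
    then show "(\<exists>x\<in>set L. x \<in> policy R S) \<and> first_in L (policy R S) = first_in rank (policy R S)"
      using props(5) S by blast
  qed
  ultimately show ?thesis using red props by auto
qed

end
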